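(* Let $R=\mathbb{Z}$ or $R=\mathbb{Z}[i]$, let $\lambda$ be a positive integer, and let $A\in R^{n\times n}$ satisfy $A^*A=\lambda I$. Let $\mathrm{SNF}(A)=\mathrm{diag}(\alpha_1,\dots,\alpha_n)$ be its Smith normal form. Then $\overline{\alpha_j}\,\alpha_{n+1-j}=\lambda$ for all $1\leq j\leq n$.
   Context: The Smith normal form of $A\in R^{n\times n}$ is $\mathrm{diag}(\alpha_1,\dots,\alpha_n)$ where $A\in\mathrm{GL}_n(R)\,\mathrm{diag}(\alpha_1,\dots,\alpha_n)\,\mathrm{GL}_n(R)$, $\alpha_1\mid\alpha_2\mid\dots\mid\alpha_n$, and the $\alpha_j$ are normalized: for $R=\mathbb{Z}$, $\alpha_j>0$; for $R=\mathbb{Z}[i]$, $\mathrm{Re}\,\alpha_j>0$ and $\mathrm{Im}\,\alpha_j\geq 0$. $A^*$ is the conjugate transpose. *)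

theory Defs
  imports "Jordan_Normal_Form.Matrix" Complex_Main
begin

text \<open>Both rings are realised as subrings of the complex numbers.
  gauss = False: R = Z; gauss = True: R = Z[i].\<close>

definition ring_R :: "bool \<Rightarrow> complex set" where
  "ring_R gauss = (if gauss then {z. Re z \<in> \<int> \<and> Im z \<in> \<int>}
                   else {z. Re z \<in> \<int> \<and> Im z = 0})"

definition R_dvd :: "bool \<Rightarrow> complex \<Rightarrow> complex \<Rightarrow> bool" where
  "R_dvd gauss a b \<longleftrightarrow> (\<exists>c \<in> ring_R gauss. b = a * c)"

definition mat_over :: "bool \<Rightarrow> nat \<Rightarrow> complex mat set" where
  "mat_over gauss n = {M \<in> carrier_mat n n. \<forall>i<n. \<forall>j<n. M $$ (i, j) \<in> ring_R gauss}"

definition GL_R :: "bool \<Rightarrow> nat \<Rightarrow> complex mat set" where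
  "GL_R gauss n = {P \<in> mat_over gauss n. \<exists>Q \<in> mat_over gauss n. P * Q = 1\<^sub>m n \<and> Q * P = 1\<^sub>m n}"

definition diag_of :: "nat \<Rightarrow> (nat \<Rightarrow> complex) \<Rightarrow> complex mat" where
  "diag_of n \<alpha> = mat n n (\<lambda>(i, j). if i = j then \<alpha> i else 0)"

definition snf_normalized :: "bool \<Rightarrow> complex \<Rightarrow> bool" where
  "snf_normalized gauss z = (if gauss then Re z > 0 \<and> Im z \<ge> 0 else Re z > 0)"

text \<open>alpha 0, ..., alpha (n-1) (0-indexed) is the Smith normal form of A over R.\<close>
definition is_SNF :: "bool \<Rightarrow> nat \<Rightarrow> complex mat \<Rightarrow> (nat \<Rightarrow> complex) \<Rightarrow> bool" where
  "is_SNF gauss n A \<alpha> \<longleftrightarrow>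
     (\<forall>j<n. \<alpha> j \<in> ring_R gauss \<and> snf_normalized gauss (\<alpha> j)) \<and>
     (\<forall>j. Suc j < n \<longrightarrow> R_dvd gauss (\<alpha> j) (\<alpha> (Suc j))) \<and>
     (\<exists>P \<in> GL_R gauss n. \<exists>Q \<in> GL_R gauss n. A = P * diag_of n \<alpha> * Q)"

definition conj_transpose :: "complex mat \<Rightarrow> complex mat" where
  "conj_transpose A = transpose_mat (map_mat cnj A)"

end

theory Submission
  imports Defs "Jordan_Normal_Form.Determinant"
begin

lemma R_0[simp]: "0 \<in> ring_R g" and R_1[simp]: "1 \<in> ring_R g"
  by (auto simp: ring_R_def)

lemma R_add[simp]: "a \<in> ring_R g \<Longrightarrow> b \<in> ring_R g \<Longrightarrow> a + b \<in> ring_R g"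
  by (auto simp: ring_R_def)

lemma R_uminus[simp]: "a \<in> ring_R g \<Longrightarrow> - a \<in> ring_R g"
  by (auto simp: ring_R_def)

lemma R_mult[simp]: "a \<in> ring_R g \<Longrightarrow> b \<in> ring_R g \<Longrightarrow> a * b \<in> ring_R g"
  by (auto simp: ring_R_def split: if_splits)

lemma R_cnj[simp]: "a \<in> ring_R g \<Longrightarrow> cnj a \<in> ring_R g"
  by (auto simp: ring_R_def split: if_splits)

lemma R_of_int[simp]: "of_int k \<in> ring_R g"
  by (auto simp: ring_R_def)

lemma R_of_nat[simp]: "of_nat k \<in> ring_R g"
  by (auto simp: ring_R_def)

lemma R_sum: "(\<And>x. x \<in> S \<Longrightarrow> f x \<in> ring_R g) \<Longrightarrow> sum f S \<in> ring_R g"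
  by (induction S rule: infinite_finite_induct) auto

lemma R_prod: "(\<And>x. x \<in> S \<Longrightarrow> f x \<in> ring_R g) \<Longrightarrow> prod f S \<in> ring_R g"
  by (induction S rule: infinite_finite_induct) auto

lemma dvd_refl[simp]: "R_dvd g a a"
  unfolding R_dvd_def by (rule bexI[of _ 1]) auto

lemma dvd_trans: "R_dvd g a b \<Longrightarrow> R_dvd g b c \<Longrightarrow> R_dvd g a c"
  unfolding R_dvd_def by (metis R_mult mult.assoc)

lemma dvd_mult: "R_dvd g a b \<Longrightarrow> R_dvd g c d \<Longrightarrow> R_dvd g (a*c) (b*d)"
  unfolding R_dvd_def by (metis R_mult mult.assoc mult.left_commute)

lemma dvd_multR: "R_dvd g a b \<Longrightarrow> x \<in> ring_R g \<Longrightarrow> R_dvd g a (b * x)"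
  unfolding R_dvd_def by (metis R_mult mult.assoc)

lemma dvd_0[simp]: "R_dvd g a 0"
  unfolding R_dvd_def by (rule bexI[of _ 0]) auto

lemma dvd_sum: "(\<And>x. x \<in> S \<Longrightarrow> R_dvd g a (f x)) \<Longrightarrow> R_dvd g a (sum f S)"
proof (induction S rule: infinite_finite_induct)
  case (insert x F)
  then show ?case unfolding R_dvd_def
    by (simp, metis R_add distrib_left)
qed auto

lemma chain_dvd:
  assumes "\<forall>j. Suc j < n \<longrightarrow> R_dvd g (b j) (b (Suc j))" "i \<le> j" "j < n"
  shows "R_dvd g (b i) (b j)"
  using assms(2,3)
proof (induction j)
  case 0 then show ?case by auto
next
  case (Suc j)
  show ?case
  proof (cases "i = Suc j")
    case False
    then have "R_dvd g (b i) (b j)" using Suc by auto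
    then show ?thesis using assms(1) Suc(3) dvd_trans by blast
  qed auto
qed

lemma prod_chain_dvd:
  assumes ch: "\<forall>j. Suc j < n \<longrightarrow> R_dvd g (b j) (b (Suc j))"
  shows "S \<subseteq> {0..<n} \<Longrightarrow> card S = k \<Longrightarrow> R_dvd g (\<Prod>i<k. b i) (\<Prod>s\<in>S. b s)"
proof (induction k arbitrary: S)
  case 0
  then have "S = {}" using finite_subset[of S "{0..<n}"] by auto
  then show ?case by simp
next
  case (Suc k)
  have fin: "finite S" using Suc(2) finite_subset by blast
  then have ne: "S \<noteq> {}" using Suc(3) by auto
  define m where "m = Max S"
  have mS: "m \<in> S" using fin ne m_def by auto
  have mn: "m < n" using mS Suc(2) by auto
  have "S \<subseteq> {0..m}" using fin m_def by auto
  then have "card S \<le> Suc m" using card_mono[of "{0..m}" S] by auto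
  then have km: "k \<le> m" using Suc(3) by auto
  have c: "card (S - {m}) = k" using Suc(3) mS fin by auto
  have IH: "R_dvd g (\<Prod>i<k. b i) (\<Prod>s\<in>S-{m}. b s)"
    using Suc(1)[OF _ c] Suc(2) by auto
  have "R_dvd g (b k) (b m)" using chain_dvd[OF ch km mn] .
  from dvd_mult[OF IH this]
  show ?case using fin mS by (simp add: prod.remove mult.commute)
qed


definition over :: "bool \<Rightarrow> complex mat \<Rightarrow> bool" where
  "over g M \<longleftrightarrow> (\<forall>i<dim_row M. \<forall>j<dim_col M. M $$ (i,j) \<in> ring_R g)"

lemma over_mult:
  assumes "over g A" "over g B" "dim_col A = dim_row B"
  shows "over g (A * B)"
  using assms unfolding over_def
  by (auto simp: scalar_prod_def intro!: R_sum)

lemma over_mat_over: "M \<in> mat_over g n \<Longrightarrow> over g M"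
  unfolding over_def mat_over_def by auto

lemma over_H: "over g M \<Longrightarrow> over g (conj_transpose M)"
  unfolding over_def conj_transpose_def by auto

lemma H_carrier[simp]: "M \<in> carrier_mat n m \<Longrightarrow> conj_transpose M \<in> carrier_mat m n"
  unfolding conj_transpose_def by auto

lemma H_mult:
  assumes "A \<in> carrier_mat n m" "B \<in> carrier_mat m p"
  shows "conj_transpose (A * B) = conj_transpose B * conj_transpose A"
  using assms unfolding conj_transpose_def
  by (intro eq_matI) (auto simp: scalar_prod_def mult.commute)

lemma H_one[simp]: "conj_transpose (1\<^sub>m n) = 1\<^sub>m n"
  unfolding conj_transpose_def by (intro eq_matI) auto

lemma H_diag: "conj_transpose (diag_of n a) = diag_of n (\<lambda>i. cnj (a i))"
  unfolding conj_transpose_def diag_of_def by (intro eq_matI) auto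

lemma diag_carrier[simp]: "diag_of n a \<in> carrier_mat n n"
  unfolding diag_of_def by auto

lemma det_over: assumes "over g M" "M \<in> carrier_mat k k" shows "det M \<in> ring_R g"
proof -
  have s: "signof p \<in> ring_R g" for p :: "nat \<Rightarrow> nat"
    by (auto simp: sign_def)
  show ?thesis
    unfolding det_def'[OF assms(2)]
    using assms s by (auto simp: over_def intro!: R_sum R_prod R_mult)
qed

definition rowsel :: "(nat \<Rightarrow> nat) \<Rightarrow> nat \<Rightarrow> complex mat \<Rightarrow> complex mat" where
  "rowsel r k X = mat k (dim_col X) (\<lambda>(i,j). X $$ (r i, j))"

definition colsel :: "(nat \<Rightarrow> nat) \<Rightarrow> nat \<Rightarrow> complex mat \<Rightarrow> complex mat" where
  "colsel c k Y = mat (dim_row Y) k (\<lambda>(i,j). Y $$ (i, c j))"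

lemma rowsel_mult: "(\<And>i. i < k \<Longrightarrow> r i < dim_row X) \<Longrightarrow> dim_col X = dim_row B \<Longrightarrow> rowsel r k (X * B) = rowsel r k X * B"
  unfolding rowsel_def by (intro eq_matI) (auto simp: scalar_prod_def row_def intro!: sum.cong)

lemma colsel_mult: "(\<And>i. i < k \<Longrightarrow> c i < dim_col Y) \<Longrightarrow> colsel c k (A * Y) = A * colsel c k Y"
  unfolding colsel_def by (intro eq_matI) (auto simp: scalar_prod_def)

lemma over_rowsel: "over g X \<Longrightarrow> (\<And>i. i < k \<Longrightarrow> r i < dim_row X) \<Longrightarrow> over g (rowsel r k X)"
  unfolding over_def rowsel_def by auto

lemma over_colsel: "over g X \<Longrightarrow> (\<And>i. i < k \<Longrightarrow> c i < dim_col X) \<Longrightarrow> over g (colsel c k X)"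
  unfolding over_def colsel_def by auto

lemma det_diag_k: fixes f :: "nat \<Rightarrow> complex" shows "det (mat k k (\<lambda>(i,j). if i = j then f i else 0)) = (\<Prod>i<k. f i)"
proof -
  have "det (mat k k (\<lambda>(i,j). if i = j then f i else 0)) = prod_list (diag_mat (mat k k (\<lambda>(i,j). if i = j then f i else (0::complex))))"
    by (rule det_upper_triangular[of _ k]) (auto simp: upper_triangular_def)
  also have "\<dots> = (\<Prod>i<k. f i)" by (simp add: prod_list_diag_prod atLeast0LessThan)
  finally show ?thesis .
qed

lemma row_diag_mult:
  assumes Y: "Y \<in> carrier_mat n k" and m: "m < n"
  shows "row (diag_of n \<gamma> * Y) m = \<gamma> m \<cdot>\<^sub>v row Y m"
proof -
  have e: "(if m = ia then a else 0) * y = (if m = ia then a * y else 0)" for ia and a y :: complex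
    by simp
  show ?thesis using Y m unfolding diag_of_def
    by (intro eq_vecI) (auto simp: scalar_prod_def e)
qed

lemma KL:
  assumes X: "X \<in> carrier_mat k n" "over g X" and Y: "Y \<in> carrier_mat n k" "over g Y"
    and S: "\<And>S. S \<subseteq> {0..<n} \<Longrightarrow> card S = k \<Longrightarrow> R_dvd g c (\<Prod>s\<in>S. \<gamma> s)"
  shows "R_dvd g c (det (X * diag_of n \<gamma> * Y))"
proof -
  define W where "W = diag_of n \<gamma> * Y"
  have W: "W \<in> carrier_mat n k" using mult_carrier_mat[OF diag_carrier Y(1)] unfolding W_def by auto
  have XW: "X * diag_of n \<gamma> * Y = X * W" unfolding W_def using assoc_mult_mat[OF X(1) diag_carrier Y(1)] .
  let ?F = "{f. (\<forall>i\<in>{0..<k}. f i \<in> {0..<n}) \<and> (\<forall>i. i \<notin> {0..<k} \<longrightarrow> f i = i)}"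
  let ?t = "\<lambda>f. det (mat\<^sub>r k k (\<lambda> i. X $$ (i, f i) \<cdot>\<^sub>v row W (f i)))"
  have "det (X * W) = sum ?t ?F"
    unfolding mat_mul_finsum_alt[OF X(1) W]
    by (rule det_linear_rows_sum, insert W, auto)
  moreover have "R_dvd g c (?t f)" if f: "f \<in> ?F" for f
  proof -
    have fi: "\<And>i. i < k \<Longrightarrow> f i < n" using f by auto
    have "mat\<^sub>r k k (\<lambda> i. X $$ (i, f i) \<cdot>\<^sub>v row W (f i)) =
          mat\<^sub>r k k (\<lambda> i. (X $$ (i, f i) * \<gamma> (f i)) \<cdot>\<^sub>v row Y (f i))"
      by (intro eq_matI) (use fi Y in \<open>auto simp: W_def row_diag_mult\<close>)
    then have t: "?t f = (\<Prod>i\<in>{0..<k}. X $$ (i, f i) * \<gamma> (f i)) * det (mat\<^sub>r k k (\<lambda> i. row Y (f i)))"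
      using det_rows_mul[of "\<lambda>i. row Y (f i)" k "\<lambda>i. X $$ (i, f i) * \<gamma> (f i)"] Y fi by auto
    show ?thesis
    proof (cases "inj_on f {0..<k}")
      case True
      have "(\<Prod>i\<in>{0..<k}. \<gamma> (f i)) = (\<Prod>s\<in>f ` {0..<k}. \<gamma> s)"
        using prod.reindex[OF True, of \<gamma>] by simp
      moreover have "R_dvd g c (\<Prod>s\<in>f ` {0..<k}. \<gamma> s)"
        by (rule S) (use fi card_image[OF True] in auto)
      ultimately have d: "R_dvd g c (\<Prod>i\<in>{0..<k}. \<gamma> (f i))" by simp
      have r1: "(\<Prod>i\<in>{0..<k}. X $$ (i, f i)) \<in> ring_R g"
        using X fi by (auto simp: over_def intro!: R_prod)
      have r2: "det (mat\<^sub>r k k (\<lambda> i. row Y (f i))) \<in> ring_R g"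
        by (rule det_over[of g _ k]) (use Y fi in \<open>auto simp: over_def\<close>)
      have "?t f = (\<Prod>i\<in>{0..<k}. \<gamma> (f i)) * ((\<Prod>i\<in>{0..<k}. X $$ (i, f i)) * det (mat\<^sub>r k k (\<lambda> i. row Y (f i))))"
        unfolding t prod.distrib by (simp add: ac_simps)
      then show ?thesis using dvd_multR[OF d R_mult[OF r1 r2]] by simp
    next
      case False
      then obtain i j where ij: "i < k" "j < k" "i \<noteq> j" "f i = f j"
        unfolding inj_on_def by auto
      have "det (mat\<^sub>r k k (\<lambda> i. row Y (f i))) = 0"
        by (rule det_identical_rows[OF _ ij(3) ij(1) ij(2)]) (use ij in auto)
      then show ?thesis using t by simp
    qed
  qed
  ultimately show ?thesis unfolding XW by (metis (no_types, lifting) dvd_sum)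
qed

lemma int_sq_one: fixes a b :: int assumes "a^2 + b^2 = 1"
  shows "(a = 1 \<and> b = 0) \<or> (a = -1 \<and> b = 0) \<or> (a = 0 \<and> b = 1) \<or> (a = 0 \<and> b = -1)"
proof -
  have "a^2 \<le> 1" "b^2 \<le> 1" using assms by (smt (verit) zero_le_power2)+
  then have "\<bar>a\<bar> \<le> 1" "\<bar>b\<bar> \<le> 1" by (simp_all add: abs_square_le_1)
  then have "a \<in> {-1,0,1}" "b \<in> {-1,0,1}" by auto
  then show ?thesis using assms by auto
qed

lemma unit_norm:
  assumes u: "u \<in> ring_R g" and v: "v \<in> ring_R g" and uv: "u * v = 1"
    and z: "snf_normalized g z" and uz: "snf_normalized g (u * z)"
  shows "u = 1"
proof -
  obtain a b c d :: int where ab: "Re u = a" "Im u = b" and cd: "Re v = c" "Im v = d"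
    using u v unfolding ring_R_def by (auto split: if_splits elim!: Ints_cases)
  have "Re (u*v) = 1" "Im (u*v) = 0" using uv by auto
  then have "real_of_int (a*c - b*d) = 1" "real_of_int (a*d + b*c) = 0" using ab cd
    by simp_all
  then have e1: "a*c - b*d = 1" and e2: "a*d + b*c = 0" by linarith+
  have "(a^2+b^2)*(c^2+d^2) = (a*c-b*d)^2 + (a*d+b*c)^2" by (simp add: algebra_simps power2_eq_square)
  also have "\<dots> = 1" using e1 e2 by simp
  finally have 1: "(a^2+b^2)*(c^2+d^2) = 1" .
  moreover have "a^2 + b^2 \<ge> 0" by simp
  ultimately have "a^2 + b^2 > 0" by (metis mult_zero_left order_le_less zero_neq_one)
  with pos_zmult_eq_1_iff[OF this] 1 have "a^2 + b^2 = 1" by blast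
  from int_sq_one[OF this] have "(u = 1) \<or> (u = -1) \<or> (u = \<i>) \<or> (u = -\<i>)"
    using ab by (auto simp: complex_eq_iff)
  moreover have "u \<noteq> -1" using z uz by (auto simp: snf_normalized_def split: if_splits)
  moreover have "u \<noteq> \<i>" using z uz u by (auto simp: snf_normalized_def ring_R_def split: if_splits)
  moreover have "u \<noteq> -\<i>" using z uz u by (auto simp: snf_normalized_def ring_R_def split: if_splits)
  ultimately show ?thesis by blast
qed

lemma norm_ne0: "snf_normalized g z \<Longrightarrow> z \<noteq> 0"
  by (auto simp: snf_normalized_def split: if_splits)

lemma norm_scale: "snf_normalized g a \<Longrightarrow> c > 0 \<Longrightarrow> snf_normalized g (complex_of_real c * a)"
  by (auto simp: snf_normalized_def split: if_splits)

lemma div_cnj_eq: assumes "a \<noteq> 0" shows "complex_of_real r / cnj a = complex_of_real (r / (cmod a)^2) * a"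
proof -
  have "complex_of_real ((cmod a)^2) = a * cnj a" by (rule complex_norm_square)
  moreover have "cnj a \<noteq> 0" using assms by simp
  moreover have "cmod a \<noteq> 0" using assms by simp
  ultimately show ?thesis by (simp add: field_simps)
qed

lemma norm_beta: assumes "snf_normalized g a" "lam > 0"
  shows "snf_normalized g (of_nat lam / cnj a)"
proof -
  have a: "a \<noteq> 0" using norm_ne0[OF assms(1)] .
  have "(of_nat lam :: complex) / cnj a = complex_of_real (real lam / (cmod a)^2) * a"
    using div_cnj_eq[OF a, of "real lam"] by simp
  moreover have "real lam / (cmod a)^2 > 0" using assms a by simp
  ultimately show ?thesis using norm_scale[OF assms(1), of "real lam / (cmod a)^2"] by metis
qed

lemma mult_carrier_nn[simp]: "A \<in> carrier_mat n n \<Longrightarrow> B \<in> carrier_mat n n \<Longrightarrow> A * B \<in> carrier_mat n n"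
  by (rule mult_carrier_mat)

lemma algebra_part:
  assumes P: "P \<in> GL_R g n" and Q: "Q \<in> GL_R g n" and A: "A = P * diag_of n \<alpha> * Q"
    and HA: "conj_transpose A * A = of_nat lam \<cdot>\<^sub>m 1\<^sub>m n"
    and nz: "\<And>i. i < n \<Longrightarrow> \<alpha> i \<noteq> 0"
  shows "\<exists>X Y X' Y'. X \<in> carrier_mat n n \<and> Y \<in> carrier_mat n n \<and> X' \<in> carrier_mat n n \<and> Y' \<in> carrier_mat n n
     \<and> over g X \<and> over g Y \<and> over g X' \<and> over g Y'
     \<and> X * diag_of n \<alpha> * Y = diag_of n (\<lambda>i. of_nat lam / cnj (\<alpha> i))
     \<and> X' * diag_of n (\<lambda>i. of_nat lam / cnj (\<alpha> i)) * Y' = diag_of n \<alpha>"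
proof -
  define H where "H = conj_transpose"
  define D where "D = diag_of n \<alpha>"
  obtain P' where P': "P' \<in> mat_over g n" "P * P' = 1\<^sub>m n" "P' * P = 1\<^sub>m n" and Pm: "P \<in> mat_over g n"
    using P unfolding GL_R_def by auto
  obtain Q' where Q': "Q' \<in> mat_over g n" "Q * Q' = 1\<^sub>m n" "Q' * Q = 1\<^sub>m n" and Qm: "Q \<in> mat_over g n"
    using Q unfolding GL_R_def by auto
  have cP: "P \<in> carrier_mat n n" and cP': "P' \<in> carrier_mat n n" and cQ: "Q \<in> carrier_mat n n"
    and cQ': "Q' \<in> carrier_mat n n" using P' Pm Q' Qm unfolding mat_over_def by auto
  have cD: "D \<in> carrier_mat n n" unfolding D_def by simp
  have cH: "H M \<in> carrier_mat n n" if "M \<in> carrier_mat n n" for M using that unfolding H_def by simp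
  have asc: "\<And>A B C. A \<in> carrier_mat n n \<Longrightarrow> B \<in> carrier_mat n n \<Longrightarrow> C \<in> carrier_mat n n \<Longrightarrow>
     A * B * C = A * (B * (C::complex mat))" by simp
  have mc: "\<And>A B. A \<in> carrier_mat n n \<Longrightarrow> B \<in> carrier_mat n n \<Longrightarrow> A * B \<in> carrier_mat n n" by simp
  note c = cP cP' cQ cQ' cD cH[OF cP] cH[OF cP'] cH[OF cQ] cH[OF cQ'] cH[OF cD]
  have HA': "H A = H Q * (H D * H P)"
    unfolding A H_def D_def[symmetric] using c
    by (simp add: H_mult[of _ n n _ n] del: assoc_mult_mat)
  have HQQ: "H Q' * H Q = 1\<^sub>m n" using H_mult[OF cQ cQ'] Q'(2) by (simp add: H_def)
  have HPP: "H P' * H P = 1\<^sub>m n" using H_mult[OF cP cP'] P'(2) by (simp add: H_def)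
  have HQQ2: "H Q * H Q' = 1\<^sub>m n" using H_mult[OF cQ' cQ] Q'(3) by (simp add: H_def)
  define X where "X = H P * P"
  define Y where "Y = Q * H Q"
  define E where "E = X * D * Y"
  define X' where "X' = P' * H P'"
  define Y' where "Y' = H Q' * Q'"
  have cX: "X \<in> carrier_mat n n" "Y \<in> carrier_mat n n" "X' \<in> carrier_mat n n" "Y' \<in> carrier_mat n n"
    "E \<in> carrier_mat n n"
    unfolding X_def Y_def X'_def Y'_def E_def using c by auto
  have "H Q' * (H A * A) * H Q = (H Q' * H Q) * (H D * E)"
    unfolding HA' unfolding A D_def[symmetric] E_def X_def Y_def using c by (simp add: asc mc del: assoc_mult_mat)
  also have "\<dots> = H D * E" using HQQ cX c by simp
  finally have "H D * E = H Q' * (of_nat lam \<cdot>\<^sub>m 1\<^sub>m n) * H Q" using HA by (simp add: H_def)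
  also have "\<dots> = of_nat lam \<cdot>\<^sub>m 1\<^sub>m n"
    using HQQ c mult_smult_distrib[OF cH[OF cQ'] one_carrier_mat, of "of_nat lam"]
      mult_smult_assoc_mat[OF cH[OF cQ'] cH[OF cQ], of "of_nat lam"] by simp
  finally have HDE: "H D * E = of_nat lam \<cdot>\<^sub>m 1\<^sub>m n" .
  have Ediag: "E = diag_of n (\<lambda>i. of_nat lam / cnj (\<alpha> i))"
  proof (rule eq_matI)
    fix i j assume ij: "i < dim_row (diag_of n (\<lambda>i. of_nat lam / cnj (\<alpha> i)))"
      "j < dim_col (diag_of n (\<lambda>i. of_nat lam / cnj (\<alpha> i)))"
    then have ij: "i < n" "j < n" by (auto simp: diag_of_def)
    have "(H D * E) $$ (i,j) = row (H D * E) i $ j" using ij cX c by simp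
    also have "\<dots> = cnj (\<alpha> i) * E $$ (i,j)"
      unfolding H_def D_def H_diag using row_diag_mult[OF cX(5) ij(1)] ij cX by simp
    finally have "cnj (\<alpha> i) * E $$ (i,j) = (if i = j then of_nat lam else 0)"
      using HDE ij by (simp split: if_splits)
    then show "E $$ (i,j) = diag_of n (\<lambda>i. of_nat lam / cnj (\<alpha> i)) $$ (i,j)"
      using nz[OF ij(1)] ij unfolding diag_of_def by (auto simp: field_simps)
  qed (use cX in \<open>auto simp: diag_of_def\<close>)
  have XX: "X' * X = 1\<^sub>m n"
  proof -
    have "X' * X = P' * ((H P' * H P) * P)" unfolding X_def X'_def using c by (simp add: asc mc del: assoc_mult_mat)
    also have "\<dots> = 1\<^sub>m n" using HPP P' c by simp
    finally show ?thesis .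
  qed
  have YY: "Y * Y' = 1\<^sub>m n"
  proof -
    have "Y * Y' = Q * ((H Q * H Q') * Q')" unfolding Y_def Y'_def using c by (simp add: asc mc del: assoc_mult_mat)
    also have "\<dots> = 1\<^sub>m n" using HQQ2 Q' c by simp
    finally show ?thesis .
  qed
  have "X' * E * Y' = (X' * X) * D * (Y * Y')" unfolding E_def using cX c by (simp add: asc mc del: assoc_mult_mat)
  also have "\<dots> = D" using XX YY c by simp
  finally have DE: "X' * E * Y' = D" .
  have oP: "over g P" "over g P'" "over g Q" "over g Q'" using Pm P' Qm Q' by (auto intro: over_mat_over)
  have oX: "over g X" "over g Y" "over g X'" "over g Y'"
    unfolding X_def Y_def X'_def Y'_def H_def using oP c
    by (auto intro!: over_mult over_H[unfolded conj_transpose_def] simp: H_def conj_transpose_def)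
  show ?thesis
    by (rule exI[of _ X], rule exI[of _ Y], rule exI[of _ X'], rule exI[of _ Y'])
      (use cX oX DE Ediag E_def D_def in auto)
qed

lemma sub_mult:
  assumes X: "X \<in> carrier_mat n n" and Y: "Y \<in> carrier_mat n n"
    and r: "\<And>i. i < k \<Longrightarrow> r i < n" and c: "\<And>i. i < k \<Longrightarrow> c i < n"
  shows "rowsel r k (colsel c k (X * diag_of n \<gamma> * Y)) = rowsel r k X * diag_of n \<gamma> * colsel c k Y"
proof -
  have XD: "X * diag_of n \<gamma> \<in> carrier_mat n n" using X by simp
  have "colsel c k (X * diag_of n \<gamma> * Y) = (X * diag_of n \<gamma>) * colsel c k Y"
    by (rule colsel_mult) (use c Y in auto)
  moreover have "rowsel r k ((X * diag_of n \<gamma>) * colsel c k Y) = rowsel r k (X * diag_of n \<gamma>) * colsel c k Y"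
    by (rule rowsel_mult) (use r XD Y in \<open>auto simp: colsel_def\<close>)
  moreover have "rowsel r k (X * diag_of n \<gamma>) = rowsel r k X * diag_of n \<gamma>"
    by (rule rowsel_mult) (use r X in \<open>auto simp: diag_of_def\<close>)
  ultimately show ?thesis by simp
qed

lemma rowsel_carrier: "X \<in> carrier_mat n m \<Longrightarrow> rowsel r k X \<in> carrier_mat k m"
  unfolding rowsel_def by auto

lemma colsel_carrier: "X \<in> carrier_mat n m \<Longrightarrow> colsel r k X \<in> carrier_mat n k"
  unfolding colsel_def by auto

theorem mainTheorem7:
  fixes gauss :: bool and n lam :: nat and A :: "complex mat" and \<alpha> :: "nat \<Rightarrow> complex"
  assumes "A \<in> mat_over gauss n"
    and "lam > 0"
    and "conj_transpose A * A = of_nat lam \<cdot>\<^sub>m 1\<^sub>m n"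
    and "is_SNF gauss n A \<alpha>"
  shows "\<forall>j<n. cnj (\<alpha> j) * \<alpha> (n - 1 - j) = of_nat lam"
proof -
  obtain P Q where snfa: "\<forall>j<n. \<alpha> j \<in> ring_R gauss \<and> snf_normalized gauss (\<alpha> j)"
    and ch: "\<forall>j. Suc j < n \<longrightarrow> R_dvd gauss (\<alpha> j) (\<alpha> (Suc j))"
    and P: "P \<in> GL_R gauss n" and Q: "Q \<in> GL_R gauss n" and A: "A = P * diag_of n \<alpha> * Q"
    using assms(4) unfolding is_SNF_def by blast
  have nz: "\<And>i. i < n \<Longrightarrow> \<alpha> i \<noteq> 0" using snfa norm_ne0 by blast
  obtain X Y X' Y' where c: "X \<in> carrier_mat n n" "Y \<in> carrier_mat n n" "X' \<in> carrier_mat n n" "Y' \<in> carrier_mat n n"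
    and o: "over gauss X" "over gauss Y" "over gauss X'" "over gauss Y'"
    and e1: "X * diag_of n \<alpha> * Y = diag_of n (\<lambda>i. of_nat lam / cnj (\<alpha> i))"
    and e2: "X' * diag_of n (\<lambda>i. of_nat lam / cnj (\<alpha> i)) * Y' = diag_of n \<alpha>"
    using algebra_part[OF P Q A assms(3) nz] by blast
  define \<gamma> where "\<gamma> = (\<lambda>i. of_nat lam / cnj (\<alpha> i) :: complex)"
  define \<beta> where "\<beta> = (\<lambda>j. \<gamma> (n - 1 - j))"
  define \<tau> where "\<tau> = (\<lambda>i::nat. n - 1 - i)"
  have e1': "X * diag_of n \<alpha> * Y = diag_of n \<gamma>" using e1 by (simp add: \<gamma>_def)
  have e2': "X' * diag_of n \<gamma> * Y' = diag_of n \<alpha>" using e2 by (simp add: \<gamma>_def)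
  have chb: "\<forall>j. Suc j < n \<longrightarrow> R_dvd gauss (\<beta> j) (\<beta> (Suc j))"
  proof (intro allI impI)
    fix j assume j: "Suc j < n"
    define a where "a = n - 1 - Suc j"
    have e: "Suc a = n - 1 - j" using j a_def by auto
    have "Suc a < n" using j e by auto
    then have "R_dvd gauss (\<alpha> a) (\<alpha> (Suc a))" using ch by auto
    then obtain c where cR: "c \<in> ring_R gauss" and cc: "\<alpha> (n-1-j) = \<alpha> a * c" unfolding R_dvd_def e by auto
    have "c \<noteq> 0" using nz[of "n-1-j"] cc j by auto
    moreover have "\<alpha> a \<noteq> 0" using nz[of a] j a_def by auto
    moreover have "\<beta> (Suc j) = of_nat lam / cnj (\<alpha> a)" unfolding \<beta>_def \<gamma>_def a_def by simp
    moreover have "\<beta> j = of_nat lam / (cnj (\<alpha> a) * cnj c)" unfolding \<beta>_def \<gamma>_def using cc by simp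
    moreover have "of_nat lam / (cnj (\<alpha> a) * cnj c) * cnj c = of_nat lam / cnj (\<alpha> a)"
      using \<open>c \<noteq> 0\<close> by (simp add: field_simps)
    ultimately have "\<beta> (Suc j) = \<beta> j * cnj c" by simp
    then show "R_dvd gauss (\<beta> j) (\<beta> (Suc j))" unfolding R_dvd_def using cR by auto
  qed
  have D1: "R_dvd gauss (\<Prod>i<k. \<alpha> i) (\<Prod>i<k. \<beta> i)" if k: "k \<le> n" for k
  proof -
    have tn: "\<And>i. i < k \<Longrightarrow> \<tau> i < n" using k \<tau>_def by auto
    have "rowsel \<tau> k (colsel \<tau> k (diag_of n \<gamma>)) = mat k k (\<lambda>(i,j). if i = j then \<beta> i else 0)"
      by (intro eq_matI) (use k in \<open>auto simp: rowsel_def colsel_def diag_of_def \<beta>_def \<tau>_def\<close>)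
    then have "det (rowsel \<tau> k X * diag_of n \<alpha> * colsel \<tau> k Y) = (\<Prod>i<k. \<beta> i)"
      using sub_mult[OF c(1,2) tn tn, where \<gamma>=\<alpha>] e1' det_diag_k by simp
    moreover have "R_dvd gauss (\<Prod>i<k. \<alpha> i) (det (rowsel \<tau> k X * diag_of n \<alpha> * colsel \<tau> k Y))"
      by (rule KL[of _ k n])
        (use c o tn prod_chain_dvd[OF ch] in \<open>auto intro: rowsel_carrier colsel_carrier over_rowsel over_colsel\<close>)
    ultimately show ?thesis by simp
  qed
  have D2: "R_dvd gauss (\<Prod>i<k. \<beta> i) (\<Prod>i<k. \<alpha> i)" if k: "k \<le> n" for k
  proof -
    define \<iota> where "\<iota> = (\<lambda>i::nat. i)"
    have tn: "\<And>i. i < k \<Longrightarrow> \<iota> i < n" using k by (auto simp: \<iota>_def)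
    have "rowsel \<iota> k (colsel \<iota> k (diag_of n \<alpha>)) = mat k k (\<lambda>(i,j). if i = j then \<alpha> i else 0)"
      by (intro eq_matI) (use k in \<open>auto simp: rowsel_def colsel_def diag_of_def \<iota>_def\<close>)
    then have "det (rowsel \<iota> k X' * diag_of n \<gamma> * colsel \<iota> k Y') = (\<Prod>i<k. \<alpha> i)"
      using sub_mult[OF c(3,4) tn tn, where \<gamma>=\<gamma>] e2' det_diag_k by simp
    moreover have "R_dvd gauss (\<Prod>i<k. \<beta> i) (\<Prod>s\<in>S. \<gamma> s)" if S: "S \<subseteq> {0..<n}" "card S = k" for S
    proof -
      have inj: "inj_on \<tau> S" unfolding inj_on_def \<tau>_def
      proof (intro ballI impI)
        fix x y assume "x \<in> S" "y \<in> S" "n - 1 - x = n - 1 - y"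
        moreover have "x < n" "y < n" using S \<open>x \<in> S\<close> \<open>y \<in> S\<close> by auto
        ultimately show "x = y" by linarith
      qed
      have "(\<Prod>s\<in>\<tau> ` S. \<beta> s) = (\<Prod>s\<in>S. \<beta> (\<tau> s))" using prod.reindex[OF inj, of \<beta>] by simp
      also have "\<dots> = (\<Prod>s\<in>S. \<gamma> s)"
        by (rule prod.cong) (use S in \<open>auto simp: \<beta>_def \<tau>_def\<close>)
      finally have eq: "(\<Prod>s\<in>\<tau> ` S. \<beta> s) = (\<Prod>s\<in>S. \<gamma> s)" .
      have "R_dvd gauss (\<Prod>i<k. \<beta> i) (\<Prod>s\<in>\<tau> ` S. \<beta> s)"
        by (rule prod_chain_dvd[OF chb]) (use S card_image[OF inj] in \<open>auto simp: \<tau>_def\<close>)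
      then show ?thesis using eq by simp
    qed
    moreover have "R_dvd gauss (\<Prod>i<k. \<beta> i) (det (rowsel \<iota> k X' * diag_of n \<gamma> * colsel \<iota> k Y'))"
      by (rule KL[of _ k n])
        (use c o tn calculation(2) in \<open>auto intro: rowsel_carrier colsel_carrier over_rowsel over_colsel\<close>)
    ultimately show ?thesis by simp
  qed
  show ?thesis
  proof (intro allI impI)
    fix j assume j: "j < n"
    have bnz: "\<beta> i \<noteq> 0" if "i < n" for i using nz[of "n - 1 - i"] that assms(2) by (auto simp: \<beta>_def \<gamma>_def)
    have Pa: "(\<Prod>i<j. \<alpha> i) \<noteq> 0" using nz j by auto
    have Pb: "(\<Prod>i<j. \<beta> i) \<noteq> 0" using bnz j by auto
    obtain f1 where f1: "f1 \<in> ring_R gauss" "(\<Prod>i<Suc j. \<beta> i) = (\<Prod>i<Suc j. \<alpha> i) * f1"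
      using D1[of "Suc j"] j unfolding R_dvd_def by auto
    obtain f2 where f2: "f2 \<in> ring_R gauss" "(\<Prod>i<j. \<alpha> i) = (\<Prod>i<j. \<beta> i) * f2"
      using D2[of j] j unfolding R_dvd_def by auto
    obtain f3 where f3: "f3 \<in> ring_R gauss" "(\<Prod>i<Suc j. \<alpha> i) = (\<Prod>i<Suc j. \<beta> i) * f3"
      using D2[of "Suc j"] j unfolding R_dvd_def by auto
    obtain f4 where f4: "f4 \<in> ring_R gauss" "(\<Prod>i<j. \<beta> i) = (\<Prod>i<j. \<alpha> i) * f4"
      using D1[of j] j unfolding R_dvd_def by auto
    have "\<beta> j * (\<Prod>i<j. \<beta> i) = (\<Prod>i<Suc j. \<beta> i)" by (simp add: mult.commute)
    also have "\<dots> = (\<Prod>i<Suc j. \<alpha> i) * f1" by (rule f1(2))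
    also have "\<dots> = (\<Prod>i<j. \<alpha> i) * \<alpha> j * f1" by simp
    also have "\<dots> = (\<Prod>i<j. \<beta> i) * f2 * \<alpha> j * f1" unfolding f2(2) ..
    also have "\<dots> = \<alpha> j * (f2 * f1) * (\<Prod>i<j. \<beta> i)" by (simp only: ac_simps)
    finally have "\<beta> j * (\<Prod>i<j. \<beta> i) = \<alpha> j * (f2 * f1) * (\<Prod>i<j. \<beta> i)" .
    then have bv: "\<beta> j = \<alpha> j * (f2 * f1)" using Pb by simp
    have "\<alpha> j * (\<Prod>i<j. \<alpha> i) = (\<Prod>i<Suc j. \<alpha> i)" by (simp add: mult.commute)
    also have "\<dots> = (\<Prod>i<Suc j. \<beta> i) * f3" by (rule f3(2))
    also have "\<dots> = (\<Prod>i<j. \<beta> i) * \<beta> j * f3" by simp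
    also have "\<dots> = (\<Prod>i<j. \<alpha> i) * f4 * \<beta> j * f3" unfolding f4(2) ..
    also have "\<dots> = \<beta> j * (f4 * f3) * (\<Prod>i<j. \<alpha> i)" by (simp only: ac_simps)
    finally have "\<alpha> j * (\<Prod>i<j. \<alpha> i) = \<beta> j * (f4 * f3) * (\<Prod>i<j. \<alpha> i)" .
    then have au: "\<alpha> j = \<beta> j * (f4 * f3)" using Pa by simp
    have "\<alpha> j = \<alpha> j * ((f4 * f3) * (f2 * f1))" by (subst au, subst bv) (simp only: ac_simps)
    then have uv: "(f4 * f3) * (f2 * f1) = 1" using nz[OF j] by simp
    have nb: "snf_normalized gauss (\<beta> j)"
      using norm_beta[of gauss "\<alpha> (n - 1 - j)" lam] snfa assms(2) j by (auto simp: \<beta>_def \<gamma>_def)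
    have "f4 * f3 = 1"
      by (rule unit_norm[OF _ _ uv nb]) (use f1(1) f2(1) f3(1) f4(1) au snfa j in \<open>auto simp: mult.commute\<close>)
    then have "\<alpha> j = of_nat lam / cnj (\<alpha> (n - 1 - j))" using au by (simp add: \<beta>_def \<gamma>_def)
    then have "cnj (\<alpha> j) = of_nat lam / \<alpha> (n - 1 - j)" by simp
    then show "cnj (\<alpha> j) * \<alpha> (n - 1 - j) = of_nat lam" using nz[of "n - 1 - j"] j by simp
  qed
qed

end
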